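(* Let $\mathcal{K}$ be a pointed closed convex cone in a finite-dimensional Euclidean space. Then for any face $\mathcal{F}$ of $\mathcal{K}$ with $\dim\mathcal{F}>1$ there exists $\beta>0$ such that for every $x\in\operatorname{span}\mathcal{F}$ and every $$y\in\operatorname*{Argmax}_{u\in\mathcal{F},\ \|u\|=1}\langle x,u\rangle$$ we have $$\operatorname{dist}(x+ty,\mathcal{K})\le\operatorname{dist}(x,\mathcal{K})\quad\text{and}\quad\operatorname{dist}(x,\mathcal{F})\le\beta\operatorname{dist}(x+ty,\mathcal{F})\quad\text{for all }t\ge0.$$
   Context: Pointed means $\mathcal{K}\cap(-\mathcal{K})=\{0\}$. A face of $\mathcal{K}$ is a closed convex subset $\mathcal{F}\subseteq\mathcal{K}$ such that whenever $x,y\in\mathcal{K}$ and $\alpha x+(1-\alpha)y\in\mathcal{F}$ for some $\alpha\in(0,1)$, then $x,y\in\mathcal{F}$. *)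

theory Defs
  imports "HOL-Analysis.Analysis"
begin

definition is_face :: "'a::real_normed_vector set \<Rightarrow> 'a set \<Rightarrow> bool" where
  "is_face K F \<longleftrightarrow> closed F \<and> convex F \<and> F \<subseteq> K \<and>
     (\<forall>x\<in>K. \<forall>y\<in>K. \<forall>\<alpha>::real. 0 < \<alpha> \<and> \<alpha> < 1 \<and> \<alpha> *\<^sub>R x + (1 - \<alpha>) *\<^sub>R y \<in> F \<longrightarrow> x \<in> F \<and> y \<in> F)"

definition pointed :: "'a::real_vector set \<Rightarrow> bool" where
  "pointed K \<longleftrightarrow> K \<inter> uminus ` K = {0}"

end

theory Submission
  imports Defs
begin

lemma face_conic:
  fixes K F :: "'a::euclidean_space set"
  assumes "convex_cone K" "is_face K F" "F \<noteq> {}"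
  shows "conic F"
proof -
  have cK: "conic K" "0 \<in> K" using assms(1) unfolding convex_cone_def
    by (auto simp: conic_contains_0)
  have cvx: "convex F" and FK: "F \<subseteq> K" using assms(2) by (auto simp: is_face_def)
  obtain f0 where f0: "f0 \<in> F" using assms(3) by auto
  have 0: "0 \<in> F"
  proof -
    have "(1/2::real) *\<^sub>R (2 *\<^sub>R f0) + (1 - 1/2) *\<^sub>R 0 \<in> F" using f0 by simp
    moreover have "2 *\<^sub>R f0 \<in> K" using f0 FK cK by (meson conicD subsetD zero_le_numeral)
    moreover have "0 < (1/2::real)" "(1/2::real) < 1" by auto
    ultimately show ?thesis using assms(2) cK(2) unfolding is_face_def by blast
  qed
  show ?thesis unfolding conic_def
  proof (intro allI impI)
    fix x and c :: real assume x: "x \<in> F" and c: "0 \<le> c"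
    show "c *\<^sub>R x \<in> F"
    proof (cases "c \<le> 1")
      case True
      have "c *\<^sub>R x + (1 - c) *\<^sub>R 0 \<in> F"
        using convexD[OF cvx x 0, of c "1-c"] c True by simp
      then show ?thesis by simp
    next
      case False
      have "(1/c) *\<^sub>R (c *\<^sub>R x) + (1 - 1/c) *\<^sub>R 0 \<in> F" using x False by simp
      moreover have "c *\<^sub>R x \<in> K" using x FK cK c by (meson conicD subsetD)
      moreover have "0 < 1/c" "1/c < 1" using False by auto
      ultimately show ?thesis using assms(2) cK(2) unfolding is_face_def by blast
    qed
  qed
qed

lemma two_units:
  fixes F :: "'a::euclidean_space set"
  assumes "conic F" "aff_dim F > 1"
  shows "\<exists>u1\<in>F. \<exists>u2\<in>F. norm u1 = 1 \<and> norm u2 = 1 \<and> u1 \<noteq> u2"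
proof (rule ccontr)
  assume H: "\<not> ?thesis"
  have "\<not> F \<subseteq> {0}"
  proof
    assume "F \<subseteq> {0}"
    then have "aff_dim F \<le> aff_dim {0::'a}" by (rule aff_dim_subset)
    then show False using assms(2) by simp
  qed
  then obtain f where f: "f \<in> F" "f \<noteq> 0" by auto
  define u where "u = (1 / norm f) *\<^sub>R f"
  have u: "u \<in> F" "norm u = 1" using f assms(1) unfolding u_def by (auto intro: conicD)
  have "F \<subseteq> span {u}"
  proof
    fix g assume g: "g \<in> F"
    show "g \<in> span {u}"
    proof (cases "g = 0")
      case True then show ?thesis by (simp add: span_zero)
    next
      case False
      define w where "w = (1 / norm g) *\<^sub>R g"
      have w: "w \<in> F" "norm w = 1" using g False assms(1) unfolding w_def by (auto intro: conicD)
      then have "w = u" using H u by blast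
      then have "g = norm g *\<^sub>R u" using False unfolding w_def by auto
      then show ?thesis by (metis span_base span_mul singletonI)
    qed
  qed
  then have "aff_dim F \<le> aff_dim (span {u})" by (rule aff_dim_subset)
  also have "\<dots> = int (dim {u})" by (simp add: aff_dim_subspace)
  also have "\<dots> \<le> 1" by simp
  finally show False using assms(2) by simp
qed

lemma polar_infdist:
  fixes F :: "'a::euclidean_space set"
  assumes "closed F" "F \<noteq> {}" "\<forall>f\<in>F. inner v f \<le> 0"
  shows "inner z v \<le> norm v * infdist z F"
proof -
  obtain a where a: "a \<in> F" "infdist z F = dist z a"
    using infdist_attains_inf[OF assms(1,2)] by blast
  have "inner z v \<le> inner z v - inner v a" using assms(3) a by auto
  also have "\<dots> = inner (z - a) v" by (simp add: inner_diff_left inner_commute[of v a])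
  also have "\<dots> \<le> norm (z - a) * norm v" by (rule norm_cauchy_schwarz)
  finally show ?thesis using a by (simp add: dist_norm mult.commute)
qed


theorem proposition4p4:
  fixes K F :: "'a::euclidean_space set"
  assumes "convex_cone K" and "closed K" and "pointed K"
    and "is_face K F" and "aff_dim F > 1"
  shows "\<exists>\<beta>>0. \<forall>x\<in>span F. \<forall>y.
           (y \<in> F \<and> norm y = 1 \<and> (\<forall>u\<in>F. norm u = 1 \<longrightarrow> inner x u \<le> inner x y)) \<longrightarrow>
           (\<forall>t::real. t \<ge> 0 \<longrightarrow>
              infdist (x + t *\<^sub>R y) K \<le> infdist x K \<and>
              infdist x F \<le> \<beta> * infdist (x + t *\<^sub>R y) F)"
proof -
  have Fne: "F \<noteq> {}" using assms(5) by auto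
  have clF: "closed F" and cvF: "convex F" and FK: "F \<subseteq> K"
    using assms(4) by (auto simp: is_face_def)
  have coF: "conic F" by (rule face_conic[OF assms(1,4) Fne])
  have F0: "0 \<in> F" using coF Fne conic_contains_0 by blast
  have Kne: "K \<noteq> {}" using assms(1) convex_cone_nonempty by blast
  obtain u1 u2 where u: "u1 \<in> F" "u2 \<in> F" "norm u1 = 1" "norm u2 = 1" "u1 \<noteq> u2"
    using two_units[OF coF assms(5)] by blast
  define c where "c = norm (u1 + u2) / 2"
  have c0: "0 \<le> c" unfolding c_def by simp
  have "inner u1 u2 < 1"
  proof -
    have "0 < norm (u1 - u2)^2" using u by simp
    also have "norm (u1 - u2)^2 = 2 - 2 * inner u1 u2"
      using u dot_norm_neg[of u1 u2] by simp
    finally show ?thesis by simp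
  qed
  moreover have "norm (u1 + u2)^2 = 2 + 2 * inner u1 u2"
    using u dot_norm[of u1 u2] by simp
  ultimately have "norm (u1 + u2)^2 < 2^2" by simp
  then have "norm (u1 + u2) < 2" by (rule power_less_imp_less_base) auto
  then have c1: "c < 1" unfolding c_def by simp
  have "c^2 < 1^2" by (rule power_strict_mono) (use c0 c1 in auto)
  then have cc: "c^2 < 1" by simp
  define \<beta> where "\<beta> = 1 / (1 - c^2)"
  have b0: "\<beta> > 0" using cc unfolding \<beta>_def by simp
  have b1: "\<beta> \<ge> 1" using cc c0 unfolding \<beta>_def by (simp add: field_simps)
  show ?thesis
  proof (intro exI[of _ \<beta>] conjI b0 ballI allI impI)
    fix x y and t :: real
    assume x: "x \<in> span F"
      and yy: "y \<in> F \<and> norm y = 1 \<and> (\<forall>u\<in>F. norm u = 1 \<longrightarrow> inner x u \<le> inner x y)"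
      and t: "0 \<le> t"
    have yF: "y \<in> F" and ny: "norm y = 1" and ymax: "\<And>u. u \<in> F \<Longrightarrow> norm u = 1 \<Longrightarrow> inner x u \<le> inner x y"
      using yy by auto
    have tyF: "t *\<^sub>R y \<in> F" using coF yF t by (simp add: conicD)
    show "infdist (x + t *\<^sub>R y) K \<le> infdist x K"
    proof -
      obtain k where k: "k \<in> K" "infdist x K = dist x k"
        using infdist_attains_inf[OF assms(2) Kne] by blast
      have "k + t *\<^sub>R y \<in> K" using convex_cone_add[OF assms(1) k(1)] tyF FK by blast
      then have "infdist (x + t *\<^sub>R y) K \<le> dist (x + t *\<^sub>R y) (k + t *\<^sub>R y)" by (rule infdist_le)
      also have "\<dots> = dist x k" by (simp add: dist_norm)
      finally show ?thesis using k by simp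
    qed
    define m where "m = inner x y"
    define v where "v = x - m *\<^sub>R y"
    have yy1: "inner y y = 1" using ny by (simp add: dot_square_norm)
    have yv: "inner y v = 0" unfolding v_def m_def using yy1 by (simp add: inner_diff_right inner_commute)
    have nv: "norm v ^ 2 = norm x ^ 2 - m^2"
      unfolding v_def power2_norm_eq_inner using yy1
      by (simp add: inner_diff_left inner_diff_right inner_commute[of y x] m_def power2_eq_square algebra_simps)
    have unitF: "(1 / norm f) *\<^sub>R f \<in> F \<and> norm ((1 / norm f) *\<^sub>R f) = 1" if "f \<in> F" "f \<noteq> 0" for f
      using that coF by (auto intro: conicD)
    have polar: "\<forall>f\<in>F. inner v f \<le> 0"
    proof (cases "m \<le> 0")
      case True
      show ?thesis
      proof
        fix f assume f: "f \<in> F"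
        show "inner v f \<le> 0"
        proof (cases "f = 0")
          case True then show ?thesis by simp
        next
          case False
          define w where "w = (1 / norm f) *\<^sub>R f"
          have w: "w \<in> F" "norm w = 1" using unitF[OF f False] w_def by auto
          have xw: "inner x w \<le> m" using ymax[OF w] m_def by simp
          have yw: "inner y w \<le> 1" using norm_cauchy_schwarz[of y w] w ny by simp
          have fw: "f = norm f *\<^sub>R w" using False unfolding w_def by simp
          have "inner v w = inner x w - m * inner y w" unfolding v_def by (simp add: inner_diff_left)
          also have "\<dots> \<le> m - m * inner y w" using xw by simp
          also have "\<dots> = m * (1 - inner y w)" by (simp add: algebra_simps)
          also have "\<dots> \<le> 0" using True yw by (simp add: mult_nonpos_nonneg)
          finally have "inner v w \<le> 0" .
          then show ?thesis by (subst fw) (simp add: mult_nonneg_nonpos)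
        qed
      qed
    next
      case False
      define p where "p = closest_point F x"
      have pF: "p \<in> F" and pmin: "\<forall>z\<in>F. dist x p \<le> dist x z"
        using closest_point_exists[OF clF Fne, of x] p_def by auto
      have dot: "\<And>z. z \<in> F \<Longrightarrow> inner (x - p) (z - p) \<le> 0"
        using any_closest_point_dot[OF cvF clF pF _ pmin] by blast
      have "inner (x - p) (2 *\<^sub>R p - p) \<le> 0" using dot[of "2 *\<^sub>R p"] coF pF by (simp add: conicD)
      moreover have "inner (x - p) (0 - p) \<le> 0" using dot[OF F0] .
      ultimately have xpp: "inner (x - p) p = 0" by (simp add: algebra_simps)
      have pol: "inner (x - p) f \<le> 0" if "f \<in> F" for f
        using dot[OF that] xpp by (simp add: inner_diff_right)
      have p0: "p \<noteq> 0"
      proof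
        assume "p = 0"
        then have "inner x y \<le> 0" using pol[OF yF] by simp
        then show False using False m_def by simp
      qed
      define w where "w = (1 / norm p) *\<^sub>R p"
      have w: "w \<in> F" "norm w = 1" using unitF[OF pF p0] w_def by auto
      have "inner x w = inner (x - p) w + inner p w" by (simp add: inner_diff_left)
      also have "inner (x - p) w = 0" unfolding w_def using xpp by simp
      also have "inner p w = norm p" unfolding w_def using p0
        by (simp add: dot_square_norm power2_eq_square)
      finally have "norm p \<le> m" using ymax[OF w] m_def by simp
      moreover have "m = inner (x - p) y + inner p y" unfolding m_def by (simp add: inner_diff_left)
      moreover have "inner (x - p) y \<le> 0" using pol[OF yF] .
      moreover have "inner p y \<le> norm p" using norm_cauchy_schwarz[of p y] ny by simp
      ultimately have py: "inner p y = m" "norm p = m" by linarith+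
      have pp: "inner p p = m^2" using py(2) by (simp add: dot_square_norm)
      have "norm (p - m *\<^sub>R y) ^ 2 = 0"
        unfolding power2_norm_eq_inner using py(1) yy1 pp
        by (simp add: inner_diff_left inner_diff_right inner_commute[of y p] power2_eq_square)
      then have "p = m *\<^sub>R y" by simp
      then have "v = x - p" unfolding v_def by simp
      then show ?thesis using pol by (simp add: inner_commute)
    qed
    have vle: "norm v \<le> infdist (x + t *\<^sub>R y) F"
    proof (cases "v = 0")
      case True then show ?thesis by (simp add: infdist_nonneg)
    next
      case False
      have "inner (x + t *\<^sub>R y) v = inner x v" using yv by (simp add: inner_add_left)
      also have "inner x v = norm v ^ 2" unfolding v_def
        using nv unfolding v_def power2_norm_eq_inner using yy1
        by (simp add: inner_diff_right m_def power2_eq_square)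
      finally have "norm v ^ 2 \<le> norm v * infdist (x + t *\<^sub>R y) F"
        using polar_infdist[OF clF Fne polar, of "x + t *\<^sub>R y"] by simp
      then show ?thesis using False by (simp add: power2_eq_square)
    qed
    have Dnn: "0 \<le> infdist (x + t *\<^sub>R y) F" by (rule infdist_nonneg)
    show "infdist x F \<le> \<beta> * infdist (x + t *\<^sub>R y) F"
    proof (cases "m \<le> 0")
      case False
      have "m *\<^sub>R y \<in> F" using coF yF False by (simp add: conicD)
      then have "infdist x F \<le> dist x (m *\<^sub>R y)" by (rule infdist_le)
      also have "\<dots> = norm v" unfolding v_def by (simp add: dist_norm)
      also have "\<dots> \<le> infdist (x + t *\<^sub>R y) F" by (rule vle)
      also have "\<dots> \<le> \<beta> * infdist (x + t *\<^sub>R y) F" using b1 Dnn by (simp add: mult_le_cancel_right1)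
      finally show ?thesis .
    next
      case True
      have "inner x u1 \<le> m" "inner x u2 \<le> m" using ymax u m_def by auto
      then have "inner x (u1 + u2) \<le> 2 * m" by (simp add: inner_add_right)
      moreover have "- (norm x * norm (u1 + u2)) \<le> inner x (u1 + u2)"
        using Cauchy_Schwarz_ineq2[of x "u1 + u2"] by linarith
      ultimately have "- (c * norm x) \<le> m" unfolding c_def by (simp add: mult.commute)
      then have "(-m)^2 \<le> (c * norm x)^2" using True c0
        by (intro power_mono) auto
      then have "m^2 \<le> (c * norm x)^2" by simp
      then have "(1 - c^2) * norm x ^ 2 \<le> norm v ^ 2" using nv by (simp add: power_mult_distrib algebra_simps)
      then have "norm x ^ 2 \<le> \<beta> * norm v ^ 2" using cc unfolding \<beta>_def by (simp add: field_simps)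
      also have "\<dots> \<le> \<beta>^2 * norm v ^ 2" using b1 by (simp add: mult_right_mono power2_eq_square)
      finally have "norm x ^ 2 \<le> (\<beta> * norm v)^2" by (simp add: power_mult_distrib)
      then have "norm x \<le> \<beta> * norm v" using b0 by (meson power2_le_imp_le mult_nonneg_nonneg norm_ge_zero less_imp_le)
      have "infdist x F \<le> dist x 0" using F0 by (rule infdist_le)
      also have "\<dots> = norm x" by simp
      also have "\<dots> \<le> \<beta> * norm v" by fact
      also have "\<dots> \<le> \<beta> * infdist (x + t *\<^sub>R y) F" using vle b0 by simp
      finally show ?thesis .
    qed
  qed
qed

end
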